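(* Let $n\ge 2$ and let $B$ be an $n\times n$ agreement matrix. Then $IA_\epsilon(B)$ exists. Moreover, if $l$ and $m$ are the numbers of non-null columns and non-null rows of $B$ respectively, then $$IA_\epsilon(B)=\begin{cases}\frac{n-l}{n}&\text{if }H(Y_B^+)=0,\\[2pt] \frac{n-m}{n}&\text{if }H(X_B^+)=0,\\[2pt] 1+\frac{H(Y_B^+)-H((X_BY_B)^+)}{H(X_B^+)}&\text{if }0<H(X_B^+)\le H(Y_B^+),\\[2pt] 1+\frac{H(X_B^+)-H((X_BY_B)^+)}{H(Y_B^+)}&\text{if }0<H(Y_B^+)\le H(X_B^+).\end{cases}$$
   Context: An $n\times n$ agreement matrix $B$ has nonnegative entries $B[y][x]$ (row $y$, column $x$), not all zero. A row (column) is non-null if not all of its entries are $0$. For any $n\times n$ matrix $M$ with nonnegative real entries not all zero, let $S_M=\sum_{y,x}M[y][x]$ and define random variables $X_M$ on $\{1,\dots,n\}$ with $P(X_M=x)=\sum_yM[y][x]/S_M$, $Y_M$ with $P(Y_M=y)=\sum_xM[y][x]/S_M$, and the joint variable $X_MY_M$ with $P(X_MY_M=(y,x))=M[y][x]/S_M$. $H$ is Shannon entropy in base 2, defined only when all probabilities are positive. The information agreement is $IA(M)=\frac{H(X_M)+H(Y_M)-H(X_MY_M)}{\min\{H(X_M),H(Y_M)\}}$. For $\epsilon>0$, the $0$-freed matrix $B_\epsilon$ is obtained from $B$ by replacing every zero entry by $\epsilon$, and $IA_\epsilon(B)=\lim_{\epsilon\to0^+}IA(B_\epsilon)$. For a random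 variable $Z$, the refined variable $Z^+$ is $Z$ restricted to values of positive probability, with $H(Z^+)=-\sum_{z:\,p_Z(z)>0}p_Z(z)\log_2p_Z(z)$. *)

theory Defs
  imports Complex_Main
begin

text \<open>Matrices are functions M :: nat => nat => real, M y x = entry in row y, column x,
  with indices y, x ranging over {..<n} (0-based rendering of {1..n}).\<close>

definition msum :: "nat \<Rightarrow> (nat \<Rightarrow> nat \<Rightarrow> real) \<Rightarrow> real" where
  "msum n M = (\<Sum>y<n. \<Sum>x<n. M y x)"

definition pX :: "nat \<Rightarrow> (nat \<Rightarrow> nat \<Rightarrow> real) \<Rightarrow> nat \<Rightarrow> real" where
  "pX n M x = (\<Sum>y<n. M y x) / msum n M"

definition pY :: "nat \<Rightarrow> (nat \<Rightarrow> nat \<Rightarrow> real) \<Rightarrow> nat \<Rightarrow> real" where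
  "pY n M y = (\<Sum>x<n. M y x) / msum n M"

definition pXY :: "nat \<Rightarrow> (nat \<Rightarrow> nat \<Rightarrow> real) \<Rightarrow> nat \<times> nat \<Rightarrow> real" where
  "pXY n M yx = M (fst yx) (snd yx) / msum n M"

definition entropy :: "'a set \<Rightarrow> ('a \<Rightarrow> real) \<Rightarrow> real" where
  "entropy A p = - (\<Sum>a\<in>A. p a * log 2 (p a))"

text \<open>Entropy of the refined variable Z^+: sum restricted to positive-probability values.\<close>
definition entropy_plus :: "'a set \<Rightarrow> ('a \<Rightarrow> real) \<Rightarrow> real" where
  "entropy_plus A p = - (\<Sum>a\<in>{a\<in>A. p a > 0}. p a * log 2 (p a))"

definition HX :: "nat \<Rightarrow> (nat \<Rightarrow> nat \<Rightarrow> real) \<Rightarrow> real" where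
  "HX n M = entropy {..<n} (pX n M)"
definition HY :: "nat \<Rightarrow> (nat \<Rightarrow> nat \<Rightarrow> real) \<Rightarrow> real" where
  "HY n M = entropy {..<n} (pY n M)"
definition HXY :: "nat \<Rightarrow> (nat \<Rightarrow> nat \<Rightarrow> real) \<Rightarrow> real" where
  "HXY n M = entropy ({..<n} \<times> {..<n}) (pXY n M)"

definition HX_plus :: "nat \<Rightarrow> (nat \<Rightarrow> nat \<Rightarrow> real) \<Rightarrow> real" where
  "HX_plus n M = entropy_plus {..<n} (pX n M)"
definition HY_plus :: "nat \<Rightarrow> (nat \<Rightarrow> nat \<Rightarrow> real) \<Rightarrow> real" where
  "HY_plus n M = entropy_plus {..<n} (pY n M)"
definition HXY_plus :: "nat \<Rightarrow> (nat \<Rightarrow> nat \<Rightarrow> real) \<Rightarrow> real" where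
  "HXY_plus n M = entropy_plus ({..<n} \<times> {..<n}) (pXY n M)"

definition IA :: "nat \<Rightarrow> (nat \<Rightarrow> nat \<Rightarrow> real) \<Rightarrow> real" where
  "IA n M = (HX n M + HY n M - HXY n M) / min (HX n M) (HY n M)"

definition zero_freed :: "(nat \<Rightarrow> nat \<Rightarrow> real) \<Rightarrow> real \<Rightarrow> nat \<Rightarrow> nat \<Rightarrow> real" where
  "zero_freed B e = (\<lambda>y x. if B y x = 0 then e else B y x)"

definition nonnull_cols :: "nat \<Rightarrow> (nat \<Rightarrow> nat \<Rightarrow> real) \<Rightarrow> nat" where
  "nonnull_cols n B = card {x\<in>{..<n}. \<exists>y<n. B y x \<noteq> 0}"
definition nonnull_rows :: "nat \<Rightarrow> (nat \<Rightarrow> nat \<Rightarrow> real) \<Rightarrow> nat" where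
  "nonnull_rows n B = card {y\<in>{..<n}. \<exists>x<n. B y x \<noteq> 0}"

end

theory Submission imports Defs begin

lemma inv_log_lim: "((\<lambda>e::real. 1 / log 2 e) \<longlongrightarrow> 0) (at_right 0)"
proof -
  have "((\<lambda>e. inverse (ln e)) \<longlongrightarrow> (0::real)) (at_right 0)"
    using filterlim_compose[OF tendsto_inverse_0 filterlim_mono[OF ln_at_0 at_bot_le_at_infinity order_refl]] .
  then have "((\<lambda>e. ln 2 * inverse (ln e)) \<longlongrightarrow> ln 2 * (0::real)) (at_right 0)"
    by (intro tendsto_intros)
  then show ?thesis by (simp add: log_def divide_inverse mult.commute)
qed


lemma ent_generic:
  fixes A :: "'a set" and c d :: "'a \<Rightarrow> real"
  assumes fin: "finite A" and c0: "\<forall>a\<in>A. c a \<ge> 0" and d0: "\<forall>a\<in>A. d a \<ge> 0"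
    and cd: "\<forall>a\<in>A. c a = 0 \<longrightarrow> d a > 0" and Cpos: "(\<Sum>a\<in>A. c a) > 0"
  shows "\<exists>F. (\<forall>e>0. entropy A (\<lambda>a. (c a + d a * e) / (\<Sum>a\<in>A. c a + d a * e)) =
             F e - (\<Sum>a\<in>{a\<in>A. c a = 0}. d a) * (e * log 2 e) / (\<Sum>a\<in>A. c a + d a * e))
        \<and> (F \<longlongrightarrow> entropy_plus A (\<lambda>a. c a / (\<Sum>a\<in>A. c a))) (at_right 0)
        \<and> ((\<lambda>e. (F e - entropy_plus A (\<lambda>a. c a / (\<Sum>a\<in>A. c a))) / (e * log 2 e)) \<longlongrightarrow> 0) (at_right 0)"
proof -
  define C where "C = (\<Sum>a\<in>A. c a)"
  define D where "D = (\<Sum>a\<in>A. d a)"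
  define P where "P = {a\<in>A. c a > 0}"
  define Z where "Z = {a\<in>A. c a = 0}"
  have PZ: "A = P \<union> Z" "P \<inter> Z = {}" using c0 by (auto simp: P_def Z_def)
  have finP: "finite P" and finZ: "finite Z" using fin by (auto simp: P_def Z_def)
  have W: "(\<Sum>a\<in>A. c a + d a * e) = C + D * e" for e
    by (simp add: C_def D_def sum.distrib sum_distrib_right)
  define G where "G = (\<lambda>e. (\<Sum>a\<in>P. (c a + d a * e) * log 2 (c a + d a * e)) + (\<Sum>a\<in>Z. d a * e * log 2 (d a)))"
  define F where "F = (\<lambda>e. log 2 (C + D * e) - G e / (C + D * e))"
  define aZ where "aZ = (\<Sum>a\<in>Z. d a)"
  have Cp: "C > 0" using Cpos C_def by simp
  have D0: "D \<ge> 0" unfolding D_def using d0 by (simp add: sum_nonneg)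
  have ent: "entropy A (\<lambda>a. (c a + d a * e) / (\<Sum>a\<in>A. c a + d a * e)) =
             F e - aZ * (e * log 2 e) / (\<Sum>a\<in>A. c a + d a * e)" if e: "e > 0" for e
  proof -
    have Wp: "C + D * e > 0" using Cp D0 e by (simp add: add_pos_nonneg)
    have wp: "c a + d a * e > 0" if "a \<in> A" for a
      using c0 cd d0 that e by (cases "c a = 0") (auto simp: add_pos_nonneg)
    have "entropy A (\<lambda>a. (c a + d a * e) / (C + D * e)) =
        - (\<Sum>a\<in>A. (c a + d a * e) / (C + D * e) * (log 2 (c a + d a * e) - log 2 (C + D * e)))"
      unfolding entropy_def
      by (intro arg_cong[where f=uminus] sum.cong refl) (simp add: log_divide wp Wp)
    also have "\<dots> = log 2 (C + D * e) * ((\<Sum>a\<in>A. c a + d a * e) / (C + D * e))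
        - (\<Sum>a\<in>A. (c a + d a * e) * log 2 (c a + d a * e)) / (C + D * e)"
      by (simp add: sum_divide_distrib[symmetric] sum_distrib_left sum_subtractf algebra_simps)
    also have "(\<Sum>a\<in>A. c a + d a * e) / (C + D * e) = 1" using W Wp by simp
    also have "(\<Sum>a\<in>A. (c a + d a * e) * log 2 (c a + d a * e)) =
        (\<Sum>a\<in>P. (c a + d a * e) * log 2 (c a + d a * e)) + (\<Sum>a\<in>Z. (c a + d a * e) * log 2 (c a + d a * e))"
      using PZ finP finZ by (simp add: sum.union_disjoint)
    also have "(\<Sum>a\<in>Z. (c a + d a * e) * log 2 (c a + d a * e)) =
        (\<Sum>a\<in>Z. d a * e * log 2 (d a) + d a * (e * log 2 e))"
    proof (intro sum.cong refl)
      fix a assume "a \<in> Z"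
      then have "c a = 0" "d a > 0" using cd by (auto simp: Z_def)
      then show "(c a + d a * e) * log 2 (c a + d a * e) = d a * e * log 2 (d a) + d a * (e * log 2 e)"
        using e by (simp add: log_mult algebra_simps)
    qed
    also have "\<dots> = (\<Sum>a\<in>Z. d a * e * log 2 (d a)) + aZ * (e * log 2 e)"
      by (simp add: sum.distrib aZ_def sum_distrib_right)
    finally show ?thesis using W
      by (simp add: F_def G_def add_divide_distrib diff_divide_distrib)
  qed
  have F0: "F 0 = entropy_plus A (\<lambda>a. c a / C)"
  proof -
    have set: "{a\<in>A. c a / C > 0} = P" using Cp by (auto simp: P_def divide_pos_pos zero_less_divide_iff)
    have "entropy_plus A (\<lambda>a. c a / C) = - (\<Sum>a\<in>P. c a / C * (log 2 (c a) - log 2 C))"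
      unfolding entropy_plus_def set
      by (intro arg_cong[where f=uminus] sum.cong refl) (simp add: log_divide Cp P_def)
    also have "\<dots> = log 2 C * ((\<Sum>a\<in>P. c a) / C) - (\<Sum>a\<in>P. c a * log 2 (c a)) / C"
      by (simp add: sum_divide_distrib[symmetric] sum_distrib_left sum_subtractf sum_distrib_right algebra_simps)
    also have "(\<Sum>a\<in>P. c a) = C"
    proof -
      have "(\<Sum>a\<in>A. c a) = (\<Sum>a\<in>P. c a) + (\<Sum>a\<in>Z. c a)"
        using PZ finP finZ by (simp add: sum.union_disjoint)
      moreover have "(\<Sum>a\<in>Z. c a) = 0" by (simp add: Z_def)
      ultimately show ?thesis by (simp add: C_def)
    qed
    finally show ?thesis using Cp by (simp add: F_def G_def)
  qed
  have "\<exists>DF. (F has_real_derivative DF) (at 0)"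
    unfolding F_def G_def
    apply (rule exI)
    apply (rule derivative_eq_intros refl | simp add: Cp | (use Cp in force) | simp add: P_def)+
    done
  then obtain DF where DF: "(F has_real_derivative DF) (at 0)" by blast
  have contF: "(F \<longlongrightarrow> F 0) (at_right 0)"
    using DERIV_isCont[OF DF] unfolding isCont_def using filterlim_at_split by blast
  have q: "((\<lambda>e. (F e - F 0) / (e - 0)) \<longlongrightarrow> DF) (at_right 0)"
    using DF unfolding has_field_derivative_iff using filterlim_at_split by blast
  have l: "((\<lambda>e::real. 1 / log 2 e) \<longlongrightarrow> 0) (at_right 0)" by (rule inv_log_lim)
  have "((\<lambda>e. (F e - F 0) / (e - 0) * (1 / log 2 e)) \<longlongrightarrow> DF * 0) (at_right 0)"
    by (rule tendsto_mult[OF q l])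
  then have lim2: "((\<lambda>e. (F e - F 0) / (e * log 2 e)) \<longlongrightarrow> 0) (at_right 0)"
    by simp
  show ?thesis
    apply (rule exI[of _ F])
    using ent contF lim2 F0 by (simp add: C_def aZ_def Z_def)
qed

definition cX :: "nat \<Rightarrow> (nat \<Rightarrow> nat \<Rightarrow> real) \<Rightarrow> nat \<Rightarrow> real" where
  "cX n B x = (\<Sum>y<n. B y x)"
definition dX :: "nat \<Rightarrow> (nat \<Rightarrow> nat \<Rightarrow> real) \<Rightarrow> nat \<Rightarrow> real" where
  "dX n B x = (\<Sum>y<n. if B y x = 0 then 1 else 0)"
definition cY :: "nat \<Rightarrow> (nat \<Rightarrow> nat \<Rightarrow> real) \<Rightarrow> nat \<Rightarrow> real" where
  "cY n B y = (\<Sum>x<n. B y x)"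
definition dY :: "nat \<Rightarrow> (nat \<Rightarrow> nat \<Rightarrow> real) \<Rightarrow> nat \<Rightarrow> real" where
  "dY n B y = (\<Sum>x<n. if B y x = 0 then 1 else 0)"
definition cXY :: "(nat \<Rightarrow> nat \<Rightarrow> real) \<Rightarrow> nat \<times> nat \<Rightarrow> real" where
  "cXY B p = B (fst p) (snd p)"
definition dXY :: "(nat \<Rightarrow> nat \<Rightarrow> real) \<Rightarrow> nat \<times> nat \<Rightarrow> real" where
  "dXY B p = (if B (fst p) (snd p) = 0 then 1 else 0)"

lemma zf_split: "zero_freed B e y x = B y x + (if B y x = 0 then 1 else 0) * e"
  by (simp add: zero_freed_def)

lemma zf0: "zero_freed B 0 = B"
  by (auto simp: zero_freed_def fun_eq_iff)

lemma colsum_zf: "(\<Sum>y<n. zero_freed B e y x) = cX n B x + dX n B x * e"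
  by (simp add: zf_split sum.distrib cX_def dX_def sum_distrib_right)

lemma rowsum_zf: "(\<Sum>x<n. zero_freed B e y x) = cY n B y + dY n B y * e"
  by (simp add: zf_split sum.distrib cY_def dY_def sum_distrib_right)

lemma msum_X: "msum n (zero_freed B e) = (\<Sum>x<n. cX n B x + dX n B x * e)"
  unfolding msum_def by (subst sum.swap) (simp add: colsum_zf)

lemma msum_Y: "msum n (zero_freed B e) = (\<Sum>y<n. cY n B y + dY n B y * e)"
  unfolding msum_def by (simp add: rowsum_zf)

lemma msum_XY: "msum n (zero_freed B e) = (\<Sum>p\<in>{..<n}\<times>{..<n}. cXY B p + dXY B p * e)"
  unfolding msum_def by (simp add: sum.cartesian_product split_def cXY_def dXY_def zf_split)

lemma pX_zf: "pX n (zero_freed B e) = (\<lambda>x. (cX n B x + dX n B x * e) / (\<Sum>x<n. cX n B x + dX n B x * e))"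
  by (rule ext) (simp add: pX_def colsum_zf msum_X)

lemma pY_zf: "pY n (zero_freed B e) = (\<lambda>y. (cY n B y + dY n B y * e) / (\<Sum>y<n. cY n B y + dY n B y * e))"
  by (rule ext) (simp add: pY_def rowsum_zf msum_Y)

lemma pXY_zf: "pXY n (zero_freed B e) = (\<lambda>p. (cXY B p + dXY B p * e) / (\<Sum>p\<in>{..<n}\<times>{..<n}. cXY B p + dXY B p * e))"
  by (rule ext) (simp add: pXY_def msum_XY cXY_def dXY_def zf_split)

lemma pX_B: "pX n B = (\<lambda>x. cX n B x / (\<Sum>x<n. cX n B x))"
  using pX_zf[of n B 0] by (simp add: zf0)
lemma pY_B: "pY n B = (\<lambda>y. cY n B y / (\<Sum>y<n. cY n B y))"
  using pY_zf[of n B 0] by (simp add: zf0)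
lemma pXY_B: "pXY n B = (\<lambda>p. cXY B p / (\<Sum>p\<in>{..<n}\<times>{..<n}. cXY B p))"
  using pXY_zf[of n B 0] by (simp add: zf0)

lemma msum_pos:
  assumes nn: "\<forall>y<n. \<forall>x<n. B y x \<ge> 0" and nz: "\<exists>y<n. \<exists>x<n. B y x \<noteq> 0"
  shows "msum n B > 0"
proof -
  obtain y0 x0 where yx: "y0 < n" "x0 < n" "B y0 x0 \<noteq> 0" using nz by blast
  have "B y0 x0 > 0" using nn yx by force
  then have "(\<Sum>x<n. B y0 x) > 0" using yx nn by (intro sum_pos2[where i=x0]) auto
  then show ?thesis unfolding msum_def using yx nn by (intro sum_pos2[where i=y0 and f="\<lambda>y. \<Sum>x<n. B y x"]) (auto intro: sum_nonneg)
qed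

lemma msum_zf_lin: "msum n (zero_freed B e) = msum n B + (\<Sum>x<n. dX n B x) * e"
proof -
  have "msum n B = (\<Sum>x<n. cX n B x)" using msum_X[of n B 0] by (simp add: zf0)
  then show ?thesis by (simp add: msum_X sum.distrib sum_distrib_right)
qed

lemma decomp:
  assumes nn: "\<forall>y<n. \<forall>x<n. B y x \<ge> 0" and nz: "\<exists>y<n. \<exists>x<n. B y x \<noteq> 0"
  shows "\<exists>FX FY FXY. (\<forall>e>0.
      HX n (zero_freed B e) = FX e - (\<Sum>x\<in>{x\<in>{..<n}. cX n B x = 0}. dX n B x) * (e * log 2 e) / msum n (zero_freed B e) \<and>
      HY n (zero_freed B e) = FY e - (\<Sum>y\<in>{y\<in>{..<n}. cY n B y = 0}. dY n B y) * (e * log 2 e) / msum n (zero_freed B e) \<and>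
      HXY n (zero_freed B e) = FXY e - (\<Sum>p\<in>{p\<in>{..<n}\<times>{..<n}. cXY B p = 0}. dXY B p) * (e * log 2 e) / msum n (zero_freed B e))
    \<and> (FX \<longlongrightarrow> HX_plus n B) (at_right 0)
    \<and> ((\<lambda>e. (FX e - HX_plus n B) / (e * log 2 e)) \<longlongrightarrow> 0) (at_right 0)
    \<and> (FY \<longlongrightarrow> HY_plus n B) (at_right 0)
    \<and> ((\<lambda>e. (FY e - HY_plus n B) / (e * log 2 e)) \<longlongrightarrow> 0) (at_right 0)
    \<and> (FXY \<longlongrightarrow> HXY_plus n B) (at_right 0)
    \<and> ((\<lambda>e. (FXY e - HXY_plus n B) / (e * log 2 e)) \<longlongrightarrow> 0) (at_right 0)"
proof -
  have S: "msum n B > 0" using msum_pos[OF nn nz] .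
  have n0: "n > 0" using nz by auto
  have SX: "(\<Sum>x<n. cX n B x) = msum n B" using msum_X[of n B 0] by (simp add: zf0)
  have SY: "(\<Sum>y<n. cY n B y) = msum n B" using msum_Y[of n B 0] by (simp add: zf0)
  have SXY: "(\<Sum>p\<in>{..<n}\<times>{..<n}. cXY B p) = msum n B" using msum_XY[of n B 0] by (simp add: zf0)
  have gX: "\<exists>F. (\<forall>e>0. entropy {..<n} (\<lambda>a. (cX n B a + dX n B a * e) / (\<Sum>a\<in>{..<n}. cX n B a + dX n B a * e)) =
             F e - (\<Sum>a\<in>{a\<in>{..<n}. cX n B a = 0}. dX n B a) * (e * log 2 e) / (\<Sum>a\<in>{..<n}. cX n B a + dX n B a * e))
        \<and> (F \<longlongrightarrow> entropy_plus {..<n} (\<lambda>a. cX n B a / (\<Sum>a\<in>{..<n}. cX n B a))) (at_right 0)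
        \<and> ((\<lambda>e. (F e - entropy_plus {..<n} (\<lambda>a. cX n B a / (\<Sum>a\<in>{..<n}. cX n B a))) / (e * log 2 e)) \<longlongrightarrow> 0) (at_right 0)"
  proof (rule ent_generic)
    show "\<forall>a\<in>{..<n}. cX n B a \<ge> 0" using nn by (auto simp: cX_def intro: sum_nonneg)
    show "\<forall>a\<in>{..<n}. dX n B a \<ge> 0" by (auto simp: dX_def intro: sum_nonneg)
    show "\<forall>a\<in>{..<n}. cX n B a = 0 \<longrightarrow> dX n B a > 0"
    proof (intro ballI impI)
      fix a assume a: "a \<in> {..<n}" "cX n B a = 0"
      then have "\<forall>y\<in>{..<n}. B y a = 0" using nn unfolding cX_def
        by (subst (asm) sum_nonneg_eq_0_iff) auto
      then show "dX n B a > 0" using n0 by (simp add: dX_def)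
    qed
    show "(\<Sum>a\<in>{..<n}. cX n B a) > 0" using SX S by simp
  qed simp
  have gY: "\<exists>F. (\<forall>e>0. entropy {..<n} (\<lambda>a. (cY n B a + dY n B a * e) / (\<Sum>a\<in>{..<n}. cY n B a + dY n B a * e)) =
             F e - (\<Sum>a\<in>{a\<in>{..<n}. cY n B a = 0}. dY n B a) * (e * log 2 e) / (\<Sum>a\<in>{..<n}. cY n B a + dY n B a * e))
        \<and> (F \<longlongrightarrow> entropy_plus {..<n} (\<lambda>a. cY n B a / (\<Sum>a\<in>{..<n}. cY n B a))) (at_right 0)
        \<and> ((\<lambda>e. (F e - entropy_plus {..<n} (\<lambda>a. cY n B a / (\<Sum>a\<in>{..<n}. cY n B a))) / (e * log 2 e)) \<longlongrightarrow> 0) (at_right 0)"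
  proof (rule ent_generic)
    show "\<forall>a\<in>{..<n}. cY n B a \<ge> 0" using nn by (auto simp: cY_def intro: sum_nonneg)
    show "\<forall>a\<in>{..<n}. dY n B a \<ge> 0" by (auto simp: dY_def intro: sum_nonneg)
    show "\<forall>a\<in>{..<n}. cY n B a = 0 \<longrightarrow> dY n B a > 0"
    proof (intro ballI impI)
      fix a assume a: "a \<in> {..<n}" "cY n B a = 0"
      then have "\<forall>x\<in>{..<n}. B a x = 0" using nn unfolding cY_def
        by (subst (asm) sum_nonneg_eq_0_iff) auto
      then show "dY n B a > 0" using n0 by (simp add: dY_def)
    qed
    show "(\<Sum>a\<in>{..<n}. cY n B a) > 0" using SY S by simp
  qed simp
  have gXY: "\<exists>F. (\<forall>e>0. entropy ({..<n}\<times>{..<n}) (\<lambda>a. (cXY B a + dXY B a * e) / (\<Sum>a\<in>{..<n}\<times>{..<n}. cXY B a + dXY B a * e)) =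
             F e - (\<Sum>a\<in>{a\<in>{..<n}\<times>{..<n}. cXY B a = 0}. dXY B a) * (e * log 2 e) / (\<Sum>a\<in>{..<n}\<times>{..<n}. cXY B a + dXY B a * e))
        \<and> (F \<longlongrightarrow> entropy_plus ({..<n}\<times>{..<n}) (\<lambda>a. cXY B a / (\<Sum>a\<in>{..<n}\<times>{..<n}. cXY B a))) (at_right 0)
        \<and> ((\<lambda>e. (F e - entropy_plus ({..<n}\<times>{..<n}) (\<lambda>a. cXY B a / (\<Sum>a\<in>{..<n}\<times>{..<n}. cXY B a))) / (e * log 2 e)) \<longlongrightarrow> 0) (at_right 0)"
  proof (rule ent_generic)
    show "\<forall>a\<in>{..<n}\<times>{..<n}. cXY B a \<ge> 0" using nn by (auto simp: cXY_def)
    show "\<forall>a\<in>{..<n}\<times>{..<n}. dXY B a \<ge> 0" by (auto simp: dXY_def)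
    show "\<forall>a\<in>{..<n}\<times>{..<n}. cXY B a = 0 \<longrightarrow> dXY B a > 0" by (auto simp: cXY_def dXY_def)
    show "(\<Sum>a\<in>{..<n}\<times>{..<n}. cXY B a) > 0" using SXY S by simp
  qed simp
  obtain FX where FX: "\<forall>e>0. entropy {..<n} (\<lambda>a. (cX n B a + dX n B a * e) / (\<Sum>a\<in>{..<n}. cX n B a + dX n B a * e)) =
             FX e - (\<Sum>a\<in>{a\<in>{..<n}. cX n B a = 0}. dX n B a) * (e * log 2 e) / (\<Sum>a\<in>{..<n}. cX n B a + dX n B a * e)"
    "(FX \<longlongrightarrow> entropy_plus {..<n} (\<lambda>a. cX n B a / (\<Sum>a\<in>{..<n}. cX n B a))) (at_right 0)"
    "((\<lambda>e. (FX e - entropy_plus {..<n} (\<lambda>a. cX n B a / (\<Sum>a\<in>{..<n}. cX n B a))) / (e * log 2 e)) \<longlongrightarrow> 0) (at_right 0)"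
    using gX by blast
  obtain FY where FY: "\<forall>e>0. entropy {..<n} (\<lambda>a. (cY n B a + dY n B a * e) / (\<Sum>a\<in>{..<n}. cY n B a + dY n B a * e)) =
             FY e - (\<Sum>a\<in>{a\<in>{..<n}. cY n B a = 0}. dY n B a) * (e * log 2 e) / (\<Sum>a\<in>{..<n}. cY n B a + dY n B a * e)"
    "(FY \<longlongrightarrow> entropy_plus {..<n} (\<lambda>a. cY n B a / (\<Sum>a\<in>{..<n}. cY n B a))) (at_right 0)"
    "((\<lambda>e. (FY e - entropy_plus {..<n} (\<lambda>a. cY n B a / (\<Sum>a\<in>{..<n}. cY n B a))) / (e * log 2 e)) \<longlongrightarrow> 0) (at_right 0)"
    using gY by blast
  obtain FXY where FXY: "\<forall>e>0. entropy ({..<n}\<times>{..<n}) (\<lambda>a. (cXY B a + dXY B a * e) / (\<Sum>a\<in>{..<n}\<times>{..<n}. cXY B a + dXY B a * e)) =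
             FXY e - (\<Sum>a\<in>{a\<in>{..<n}\<times>{..<n}. cXY B a = 0}. dXY B a) * (e * log 2 e) / (\<Sum>a\<in>{..<n}\<times>{..<n}. cXY B a + dXY B a * e)"
    "(FXY \<longlongrightarrow> entropy_plus ({..<n}\<times>{..<n}) (\<lambda>a. cXY B a / (\<Sum>a\<in>{..<n}\<times>{..<n}. cXY B a))) (at_right 0)"
    "((\<lambda>e. (FXY e - entropy_plus ({..<n}\<times>{..<n}) (\<lambda>a. cXY B a / (\<Sum>a\<in>{..<n}\<times>{..<n}. cXY B a))) / (e * log 2 e)) \<longlongrightarrow> 0) (at_right 0)"
    using gXY by blast
  have hx: "HX_plus n B = entropy_plus {..<n} (\<lambda>a. cX n B a / (\<Sum>a\<in>{..<n}. cX n B a))"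
    by (simp add: HX_plus_def pX_B)
  have hy: "HY_plus n B = entropy_plus {..<n} (\<lambda>a. cY n B a / (\<Sum>a\<in>{..<n}. cY n B a))"
    by (simp add: HY_plus_def pY_B)
  have hxy: "HXY_plus n B = entropy_plus ({..<n}\<times>{..<n}) (\<lambda>a. cXY B a / (\<Sum>a\<in>{..<n}\<times>{..<n}. cXY B a))"
    by (simp add: HXY_plus_def pXY_B)
  show ?thesis
    apply (rule exI[of _ FX], rule exI[of _ FY], rule exI[of _ FXY])
    using FX FY FXY unfolding hx hy hxy
    by (simp add: HX_def HY_def HXY_def pX_zf pY_zf pXY_zf msum_X[symmetric] msum_Y[symmetric] msum_XY[symmetric])
qed

definition tr :: "(nat \<Rightarrow> nat \<Rightarrow> real) \<Rightarrow> nat \<Rightarrow> nat \<Rightarrow> real" where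
  "tr B = (\<lambda>y x. B x y)"

lemma zf_tr: "zero_freed (tr B) e = tr (zero_freed B e)"
  by (simp add: zero_freed_def tr_def fun_eq_iff)

lemma msum_tr: "msum n (tr M) = msum n M"
  unfolding msum_def tr_def by (rule sum.swap)

lemma pX_tr: "pX n (tr M) = pY n M"
  by (simp add: fun_eq_iff pX_def pY_def msum_tr) (simp add: tr_def)

lemma pY_tr: "pY n (tr M) = pX n M"
  by (simp add: fun_eq_iff pX_def pY_def msum_tr) (simp add: tr_def)

lemma sum_prod_swap: "(\<Sum>p\<in>A\<times>A. f p) = (\<Sum>p\<in>A\<times>A. f (snd p, fst p))"
  by (rule sum.reindex_bij_witness[where i=prod.swap and j=prod.swap]) auto

lemma HXY_tr: "HXY n (tr M) = HXY n M"
  unfolding HXY_def entropy_def pXY_def msum_tr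
  by (subst sum_prod_swap) (simp add: tr_def)

lemma IA_tr: "IA n (tr M) = IA n M"
  unfolding IA_def HX_def HY_def HXY_tr pX_tr pY_tr by (simp add: min.commute add.commute)

lemma HXp_tr: "HX_plus n (tr B) = HY_plus n B"
  by (simp add: HX_plus_def HY_plus_def pX_tr)
lemma HYp_tr: "HY_plus n (tr B) = HX_plus n B"
  by (simp add: HX_plus_def HY_plus_def pY_tr)
lemma cols_tr: "nonnull_cols n (tr B) = nonnull_rows n B"
  by (simp add: nonnull_cols_def nonnull_rows_def tr_def)
lemma rows_tr: "nonnull_rows n (tr B) = nonnull_cols n B"
  by (simp add: nonnull_cols_def nonnull_rows_def tr_def)

lemma ep_nonneg:
  assumes "finite A" "\<forall>a\<in>A. p a \<ge> 0" "sum p A = 1"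
  shows "entropy_plus A p \<ge> 0"
proof -
  have "p a * log 2 (p a) \<le> 0" if "a \<in> A" "p a > 0" for a
  proof -
    have "p a \<le> sum p A" using assms that by (intro member_le_sum) auto
    then have "log 2 (p a) \<le> 0" using assms that by simp
    then show ?thesis using that by (simp add: mult_nonneg_nonpos)
  qed
  then have "(\<Sum>a\<in>{a\<in>A. p a > 0}. p a * log 2 (p a)) \<le> 0"
    by (intro sum_nonpos) auto
  then show ?thesis unfolding entropy_plus_def by simp
qed

lemma ep_zero:
  assumes fin: "finite A" and nn: "\<forall>a\<in>A. p a \<ge> 0" and s1: "sum p A = 1" and z: "entropy_plus A p = 0"
  shows "\<exists>a0\<in>A. \<forall>a\<in>A. a \<noteq> a0 \<longrightarrow> p a = 0"
proof -
  define Q where "Q = {a\<in>A. p a > 0}"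
  have tle: "- (p a * log 2 (p a)) \<ge> 0" if "a \<in> Q" for a
  proof -
    have "p a \<le> sum p A" using nn fin that by (intro member_le_sum) (auto simp: Q_def)
    then have "log 2 (p a) \<le> 0" using s1 that by (simp add: Q_def)
    then show ?thesis using that by (simp add: Q_def mult_nonneg_nonpos)
  qed
  have "(\<Sum>a\<in>Q. - (p a * log 2 (p a))) = 0" using z unfolding entropy_plus_def Q_def
    by (simp add: sum_negf)
  then have all0: "\<forall>a\<in>Q. - (p a * log 2 (p a)) = 0"
    using tle fin by (subst (asm) sum_nonneg_eq_0_iff) (auto simp: Q_def)
  have "\<exists>a0\<in>A. p a0 > 0"
  proof (rule ccontr)
    assume "\<not> ?thesis"
    then have "\<forall>a\<in>A. p a = 0" using nn by force
    then show False using s1 by simp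
  qed
  then obtain a0 where a0: "a0 \<in> A" "p a0 > 0" by blast
  then have "log 2 (p a0) = 0" using all0 by (auto simp: Q_def)
  then have p1: "p a0 = 1" using a0 powr_log_cancel[of 2 "p a0"] by simp
  have "sum p A = p a0 + sum p (A - {a0})" using fin a0 by (simp add: sum.remove)
  then have "sum p (A - {a0}) = 0" using s1 p1 by simp
  then have "\<forall>a\<in>A - {a0}. p a = 0" using fin nn by (subst (asm) sum_nonneg_eq_0_iff) auto
  then show ?thesis using a0 by blast
qed

lemma ep_eq:
  assumes "finite A" "\<forall>a\<in>A. p a \<ge> 0"
  shows "entropy_plus A p = entropy A p"
proof -
  have "(\<Sum>a\<in>{a\<in>A. p a > 0}. p a * log 2 (p a)) = (\<Sum>a\<in>A. p a * log 2 (p a))"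
    using assms by (intro sum.mono_neutral_left) force+
  then show ?thesis by (simp add: entropy_plus_def entropy_def)
qed

lemma pY_dist:
  assumes nn: "\<forall>y<n. \<forall>x<n. B y x \<ge> 0" and nz: "\<exists>y<n. \<exists>x<n. B y x \<noteq> 0"
  shows "\<forall>y\<in>{..<n}. pY n B y \<ge> 0" "sum (pY n B) {..<n} = 1"
proof -
  have S: "msum n B > 0" using msum_pos[OF nn nz] .
  show "\<forall>y\<in>{..<n}. pY n B y \<ge> 0" using nn S by (auto simp: pY_def intro!: divide_nonneg_pos sum_nonneg)
  show "sum (pY n B) {..<n} = 1" using S
    by (simp add: pY_def sum_divide_distrib[symmetric] msum_def)
qed

lemma HYp_zero_rows:
  assumes nn: "\<forall>y<n. \<forall>x<n. B y x \<ge> 0" and nz: "\<exists>y<n. \<exists>x<n. B y x \<noteq> 0"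
    and h: "HY_plus n B = 0"
  shows "\<exists>r<n. \<forall>y<n. y \<noteq> r \<longrightarrow> (\<forall>x<n. B y x = 0)"
proof -
  have S: "msum n B > 0" using msum_pos[OF nn nz] .
  obtain r where r: "r \<in> {..<n}" "\<forall>y\<in>{..<n}. y \<noteq> r \<longrightarrow> pY n B y = 0"
    using ep_zero[OF _ pY_dist[OF nn nz] h[unfolded HY_plus_def]] by auto
  have "\<forall>x<n. B y x = 0" if "y < n" "y \<noteq> r" for y
  proof -
    have "(\<Sum>x<n. B y x) = 0" using r that S by (auto simp: pY_def)
    then show ?thesis using nn that by (subst (asm) sum_nonneg_eq_0_iff) auto
  qed
  then show ?thesis using r by auto
qed

lemma HYp_nonneg:
  assumes nn: "\<forall>y<n. \<forall>x<n. B y x \<ge> 0" and nz: "\<exists>y<n. \<exists>x<n. B y x \<noteq> 0"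
  shows "HY_plus n B \<ge> 0"
  unfolding HY_plus_def by (rule ep_nonneg[OF _ pY_dist[OF nn nz]]) simp

lemma tr_nn: "\<forall>y<n. \<forall>x<n. B y x \<ge> 0 \<Longrightarrow> \<forall>y<n. \<forall>x<n. tr B y x \<ge> 0"
  by (simp add: tr_def)
lemma tr_nz: "\<exists>y<n. \<exists>x<n. B y x \<noteq> 0 \<Longrightarrow> \<exists>y<n. \<exists>x<n. tr B y x \<noteq> 0"
  by (auto simp: tr_def)

lemma HXp_nonneg:
  assumes nn: "\<forall>y<n. \<forall>x<n. B y x \<ge> 0" and nz: "\<exists>y<n. \<exists>x<n. B y x \<noteq> 0"
  shows "HX_plus n B \<ge> 0"
  using HYp_nonneg[OF tr_nn[OF nn] tr_nz[OF nz]] by (simp add: HYp_tr)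

lemma ev_small: "\<forall>\<^sub>F e in at_right (0::real). 0 < e \<and> e < 1"
  by (auto simp: eventually_at_right[OF zero_less_one] intro!: exI[of _ 1])

lemma phi_lim: "((\<lambda>e::real. e * log 2 e) \<longlongrightarrow> 0) (at_right 0)"
proof -
  have "((\<lambda>e. ln (inverse e) / inverse e) \<longlongrightarrow> (0::real)) (at_right 0)"
    using filterlim_compose[OF ln_x_over_x_tendsto_0 filterlim_inverse_at_top_right] .
  then have "((\<lambda>e. - (ln (inverse e) / inverse e) / ln 2) \<longlongrightarrow> - (0::real) / ln 2) (at_right 0)"
    by (intro tendsto_intros) auto
  moreover have "\<forall>\<^sub>F e in at_right 0. - (ln (inverse e) / inverse e) / ln 2 = e * log 2 (e::real)"
  proof (rule eventually_mono[OF eventually_at_right_less])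
    fix e :: real assume "0 < e"
    then show "- (ln (inverse e) / inverse e) / ln 2 = e * log 2 e"
      by (simp add: log_def ln_inverse divide_inverse)
  qed
  ultimately show ?thesis by (simp add: tendsto_cong)
qed

lemma degen:
  assumes n2: "n \<ge> 2" and nn: "\<forall>y<n. \<forall>x<n. B y x \<ge> 0" and nz: "\<exists>y<n. \<exists>x<n. B y x \<noteq> 0"
    and hy0: "HY_plus n B = 0"
  shows "((\<lambda>e. IA n (zero_freed B e)) \<longlongrightarrow> (real n - real (nonnull_cols n B)) / real n) (at_right 0)"
proof -
  obtain r where r: "r < n" "\<forall>y<n. y \<noteq> r \<longrightarrow> (\<forall>x<n. B y x = 0)"
    using HYp_zero_rows[OF nn nz hy0] by blast
  define S where "S = msum n B"
  have S: "S > 0" using msum_pos[OF nn nz] S_def by simp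
  obtain x0 where x0: "x0 < n" "B r x0 \<noteq> 0" using nz r by blast
  have Brx0: "B r x0 > 0" using x0 nn r by force
  define z where "z = card {x\<in>{..<n}. B r x = 0}"
  have cardsplit: "card {x\<in>{..<n}. B r x \<noteq> 0} + z = n"
  proof -
    have "{..<n} = {x\<in>{..<n}. B r x \<noteq> 0} \<union> {x\<in>{..<n}. B r x = 0}" by auto
    then have "card {..<n} = card ({x\<in>{..<n}. B r x \<noteq> 0} \<union> {x\<in>{..<n}. B r x = 0})"
      by (rule arg_cong[where f=card])
    also have "\<dots> = card {x\<in>{..<n}. B r x \<noteq> 0} + z" unfolding z_def
      by (rule card_Un_disjoint) auto
    finally show ?thesis by simp
  qed
  have colset: "{x\<in>{..<n}. \<exists>y<n. B y x \<noteq> 0} = {x\<in>{..<n}. B r x \<noteq> 0}"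
    using r by auto
  have lval: "real (nonnull_cols n B) = real n - real z"
    using cardsplit unfolding nonnull_cols_def colset by linarith
  have cXv: "cX n B x = B r x" if "x < n" for x
  proof -
    have "cX n B x = B r x + (\<Sum>y\<in>{..<n} - {r}. B y x)"
      unfolding cX_def using r by (simp add: sum.remove)
    also have "(\<Sum>y\<in>{..<n} - {r}. B y x) = 0" using r that by (intro sum.neutral) auto
    finally show ?thesis by simp
  qed
  have dY_n: "dY n B y = real n" if "y < n" "y \<noteq> r" for y
    using r that by (simp add: dY_def)
  have dX_n: "dX n B x = real n" if "x < n" "B r x = 0" for x
  proof -
    have "\<forall>y<n. B y x = 0" using r that by metis
    then show ?thesis by (simp add: dX_def)
  qed
  have dYr: "dY n B r = real z"
  proof -
    have "dY n B r = (\<Sum>x\<in>{x\<in>{..<n}. B r x = 0}. 1)"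
      unfolding dY_def by (subst sum.inter_filter) auto
    then show ?thesis by (simp add: z_def)
  qed
  have cY_pos: "cY n B r > 0"
    unfolding cY_def using nn r x0 Brx0 by (intro sum_pos2[where i=x0]) auto
  have cY_zero: "cY n B y = 0" if "y < n" "y \<noteq> r" for y
    using r that by (simp add: cY_def)
  define aX where "aX = (\<Sum>x\<in>{x\<in>{..<n}. cX n B x = 0}. dX n B x)"
  define aY where "aY = (\<Sum>y\<in>{y\<in>{..<n}. cY n B y = 0}. dY n B y)"
  define aXY where "aXY = (\<Sum>p\<in>{p\<in>{..<n}\<times>{..<n}. cXY B p = 0}. dXY B p)"
  have aXv: "aX = real n * real z"
  proof -
    have "{x\<in>{..<n}. cX n B x = 0} = {x\<in>{..<n}. B r x = 0}" using cXv by auto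
    then have "aX = (\<Sum>x\<in>{x\<in>{..<n}. B r x = 0}. real n)" unfolding aX_def
      using dX_n by (intro sum.cong) auto
    then show ?thesis by (simp add: z_def)
  qed
  have Yset: "{y\<in>{..<n}. cY n B y = 0} = {..<n} - {r}" using cY_zero cY_pos by auto
  have aYv: "aY = real n * (real n - 1)"
  proof -
    have "aY = (\<Sum>y\<in>{..<n} - {r}. real n)" unfolding aY_def Yset using dY_n by (intro sum.cong) auto
    then show ?thesis using r by (simp add: of_nat_diff)
  qed
  have aXYv: "aXY = real z + real n * (real n - 1)"
  proof -
    have "aXY = (\<Sum>p\<in>{..<n}\<times>{..<n}. dXY B p)" unfolding aXY_def
      by (intro sum.mono_neutral_left) (auto simp: cXY_def dXY_def)
    also have "\<dots> = (\<Sum>y<n. dY n B y)"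
      by (simp add: sum.cartesian_product split_def dXY_def dY_def)
    also have "\<dots> = dY n B r + (\<Sum>y\<in>{..<n} - {r}. dY n B y)" using r by (simp add: sum.remove)
    also have "(\<Sum>y\<in>{..<n} - {r}. dY n B y) = (\<Sum>y\<in>{..<n} - {r}. real n)"
      using dY_n by (intro sum.cong) auto
    finally show ?thesis using r dYr by (simp add: of_nat_diff)
  qed
  define hx where "hx = HX_plus n B"
  have hxy: "HXY_plus n B = hx"
  proof -
    have pXYnn: "\<forall>p\<in>{..<n}\<times>{..<n}. pXY n B p \<ge> 0" using nn S S_def
      by (auto simp: pXY_def)
    have pXnn: "\<forall>x\<in>{..<n}. pX n B x \<ge> 0" using nn S S_def
      by (auto simp: pX_def intro!: sum_nonneg divide_nonneg_pos)
    have "HXY_plus n B = entropy ({..<n}\<times>{..<n}) (pXY n B)"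
      unfolding HXY_plus_def by (rule ep_eq[OF _ pXYnn]) simp
    also have "\<dots> = - (\<Sum>y<n. \<Sum>x<n. pXY n B (y, x) * log 2 (pXY n B (y, x)))"
      unfolding entropy_def by (simp add: sum.cartesian_product split_def)
    also have "(\<Sum>y<n. \<Sum>x<n. pXY n B (y, x) * log 2 (pXY n B (y, x))) =
        (\<Sum>x<n. pXY n B (r, x) * log 2 (pXY n B (r, x))) + (\<Sum>y\<in>{..<n}-{r}. \<Sum>x<n. pXY n B (y, x) * log 2 (pXY n B (y, x)))"
      by (rule sum.remove) (use r in auto)
    also have "(\<Sum>y\<in>{..<n}-{r}. \<Sum>x<n. pXY n B (y, x) * log 2 (pXY n B (y, x))) = 0"
      using r by (intro sum.neutral) (auto simp: pXY_def)
    also have "(\<Sum>x<n. pXY n B (r, x) * log 2 (pXY n B (r, x))) = (\<Sum>x<n. pX n B x * log 2 (pX n B x))"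
      by (intro sum.cong refl) (simp add: pXY_def pX_def cXv[unfolded cX_def])
    also have "- (\<dots> + 0) = entropy {..<n} (pX n B)" by (simp add: entropy_def)
    also have "\<dots> = hx" unfolding hx_def HX_plus_def by (rule ep_eq[OF _ pXnn, symmetric]) simp
    finally show ?thesis .
  qed
  obtain FX FY FXY where F:
    "\<forall>e>0. HX n (zero_freed B e) = FX e - aX * (e * log 2 e) / msum n (zero_freed B e) \<and>
      HY n (zero_freed B e) = FY e - aY * (e * log 2 e) / msum n (zero_freed B e) \<and>
      HXY n (zero_freed B e) = FXY e - aXY * (e * log 2 e) / msum n (zero_freed B e)"
    "((\<lambda>e. (FX e - hx) / (e * log 2 e)) \<longlongrightarrow> 0) (at_right 0)"
    "((\<lambda>e. (FY e - 0) / (e * log 2 e)) \<longlongrightarrow> 0) (at_right 0)"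
    "((\<lambda>e. (FXY e - hx) / (e * log 2 e)) \<longlongrightarrow> 0) (at_right 0)"
    "(FX \<longlongrightarrow> hx) (at_right 0)"
    using decomp[OF nn nz] unfolding aX_def aY_def aXY_def hx_def hy0 hxy[unfolded hx_def] by blast
  define W where "W = (\<lambda>e. msum n (zero_freed B e))"
  define D where "D = (\<Sum>x<n. dX n B x)"
  have D0: "D \<ge> 0" unfolding D_def by (auto simp: dX_def intro!: sum_nonneg)
  have Wl: "W e = S + D * e" for e unfolding W_def S_def D_def by (rule msum_zf_lin)
  have Wlim: "(W \<longlongrightarrow> S) (at_right 0)"
    unfolding Wl by (auto intro!: tendsto_eq_intros)
  define \<phi> where "\<phi> = (\<lambda>e::real. e * log 2 e)"
  define gX where "gX = (\<lambda>e. (FX e - hx) / \<phi> e)"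
  define gY where "gY = (\<lambda>e. (FY e - 0) / \<phi> e)"
  define gXY where "gXY = (\<lambda>e. (FXY e - hx) / \<phi> e)"
  have gl: "(gX \<longlongrightarrow> 0) (at_right 0)" "(gY \<longlongrightarrow> 0) (at_right 0)" "(gXY \<longlongrightarrow> 0) (at_right 0)"
    using F(2-4) unfolding gX_def gY_def gXY_def \<phi>_def by auto
  have ev: "\<forall>\<^sub>F e in at_right 0. \<phi> e < 0 \<and> W e > 0 \<and>
      HX n (zero_freed B e) = hx + \<phi> e * (gX e - aX / W e) \<and>
      HY n (zero_freed B e) = \<phi> e * (gY e - aY / W e) \<and>
      HXY n (zero_freed B e) = hx + \<phi> e * (gXY e - aXY / W e)"
    using ev_small
  proof (rule eventually_mono)
    fix e :: real assume e: "0 < e \<and> e < 1"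
    then have ph: "\<phi> e < 0" unfolding \<phi>_def by (simp add: mult_pos_neg)
    have Wp: "W e > 0" unfolding Wl using S D0 e by (simp add: add_pos_nonneg)
    have eqs: "HX n (zero_freed B e) = FX e - aX * \<phi> e / W e"
      "HY n (zero_freed B e) = FY e - aY * \<phi> e / W e"
      "HXY n (zero_freed B e) = FXY e - aXY * \<phi> e / W e"
      using F(1) e unfolding W_def \<phi>_def by auto
    show "\<phi> e < 0 \<and> W e > 0 \<and>
      HX n (zero_freed B e) = hx + \<phi> e * (gX e - aX / W e) \<and>
      HY n (zero_freed B e) = \<phi> e * (gY e - aY / W e) \<and>
      HXY n (zero_freed B e) = hx + \<phi> e * (gXY e - aXY / W e)"
      using ph Wp unfolding eqs gX_def gY_def gXY_def by (auto simp: field_simps)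
  qed
  have num: "HX n (zero_freed B e) + HY n (zero_freed B e) - HXY n (zero_freed B e) =
      \<phi> e * (gX e + gY e - gXY e - (real n - 1) * real z / W e)"
    if "HX n (zero_freed B e) = hx + \<phi> e * (gX e - aX / W e)"
       "HY n (zero_freed B e) = \<phi> e * (gY e - aY / W e)"
       "HXY n (zero_freed B e) = hx + \<phi> e * (gXY e - aXY / W e)" for e
    unfolding that aXv aYv aXYv by (simp add: field_simps) (simp add: add_divide_distrib[symmetric] diff_divide_distrib[symmetric] algebra_simps)
  have target: "(real n - real (nonnull_cols n B)) / real n = real z / real n"
    using lval by simp
  have nge: "real n \<ge> 2" using n2 by simp
  show ?thesis
  proof (cases "hx > 0")
    case True
    have hxl: "((\<lambda>e. HX n (zero_freed B e)) \<longlongrightarrow> hx) (at_right 0)"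
    proof -
      have "((\<lambda>e. FX e - aX * \<phi> e / W e) \<longlongrightarrow> hx - aX * 0 / S) (at_right 0)"
        using F(5) Wlim phi_lim S unfolding \<phi>_def by (intro tendsto_intros) auto
      moreover have "\<forall>\<^sub>F e in at_right 0. FX e - aX * \<phi> e / W e = HX n (zero_freed B e)"
        using ev_small by eventually_elim (use F(1) in \<open>auto simp: W_def \<phi>_def\<close>)
      ultimately show ?thesis by (simp add: tendsto_cong)
    qed
    have hyl: "((\<lambda>e. HY n (zero_freed B e)) \<longlongrightarrow> 0) (at_right 0)"
    proof -
      have "((\<lambda>e. \<phi> e * (gY e - aY / W e)) \<longlongrightarrow> 0 * (0 - aY / S)) (at_right 0)"
        using gl Wlim phi_lim S unfolding \<phi>_def by (intro tendsto_intros) auto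
      moreover have "\<forall>\<^sub>F e in at_right 0. \<phi> e * (gY e - aY / W e) = HY n (zero_freed B e)"
        using ev by eventually_elim auto
      ultimately show ?thesis by (simp add: tendsto_cong)
    qed
    have "((\<lambda>e. HX n (zero_freed B e) - HY n (zero_freed B e)) \<longlongrightarrow> hx - 0) (at_right 0)"
      by (intro tendsto_intros hxl hyl)
    then have evlt: "\<forall>\<^sub>F e in at_right 0. HY n (zero_freed B e) < HX n (zero_freed B e)"
      using True by (auto dest: order_tendstoD(1)[where a=0] elim: eventually_mono)
    have lim: "((\<lambda>e. (gX e + gY e - gXY e - (real n - 1) * real z / W e) / (gY e - aY / W e))
        \<longlongrightarrow> (0 + 0 - 0 - (real n - 1) * real z / S) / (0 - aY / S)) (at_right 0)"
      using gl Wlim S nge unfolding aYv by (intro tendsto_intros) auto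
    have val: "(0 + 0 - 0 - (real n - 1) * real z / S) / (0 - aY / S) = real z / real n"
      using S nge unfolding aYv by (simp add: field_simps)
    have "\<forall>\<^sub>F e in at_right 0. (gX e + gY e - gXY e - (real n - 1) * real z / W e) / (gY e - aY / W e) = IA n (zero_freed B e)"
      using ev evlt
    proof eventually_elim
      case (elim e)
      then have "min (HX n (zero_freed B e)) (HY n (zero_freed B e)) = \<phi> e * (gY e - aY / W e)" by simp
      then show ?case unfolding IA_def num[OF elim(1)[THEN conjunct2, THEN conjunct2, THEN conjunct1]
          elim(1)[THEN conjunct2, THEN conjunct2, THEN conjunct2, THEN conjunct1]
          elim(1)[THEN conjunct2, THEN conjunct2, THEN conjunct2, THEN conjunct2]]
        using elim(1) by simp
    qed
    then show ?thesis using lim unfolding val target by (simp add: tendsto_cong)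
  next
    case False
    then have hx0: "hx = 0" using HXp_nonneg[OF nn nz] hx_def by simp
    obtain c where c: "c < n" "\<forall>x<n. x \<noteq> c \<longrightarrow> (\<forall>y<n. B y x = 0)"
      using HYp_zero_rows[OF tr_nn[OF nn] tr_nz[OF nz]] hx0 unfolding hx_def HYp_tr by (auto simp: tr_def)
    have "{x\<in>{..<n}. B r x = 0} = {..<n} - {c}"
    proof -
      have "c = x0" using c x0 r by metis
      then show ?thesis using c x0 r by auto
    qed
    then have zv: "real z = real n - 1" using c unfolding z_def by (simp add: of_nat_diff)
    have lim: "((\<lambda>e. (gX e + gY e - gXY e - (real n - 1) * real z / W e) / max (gX e - aX / W e) (gY e - aY / W e))
        \<longlongrightarrow> (0 + 0 - 0 - (real n - 1) * real z / S) / max (0 - aX / S) (0 - aY / S)) (at_right 0)"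
      using gl Wlim S nge unfolding aYv aXv zv by (intro tendsto_intros) (auto simp: max_def)
    have val: "(0 + 0 - 0 - (real n - 1) * real z / S) / max (0 - aX / S) (0 - aY / S) = real z / real n"
      using S nge unfolding aYv aXv zv by (simp add: field_simps)
    have "\<forall>\<^sub>F e in at_right 0. (gX e + gY e - gXY e - (real n - 1) * real z / W e) / max (gX e - aX / W e) (gY e - aY / W e) = IA n (zero_freed B e)"
      using ev
    proof eventually_elim
      case (elim e)
      have mm: "min (\<phi> e * a) (\<phi> e * b) = \<phi> e * max a b" for a b
        using elim by (auto simp: min_def max_def mult_le_cancel_left)
      have eX: "HX n (zero_freed B e) = \<phi> e * (gX e - aX / W e)" using elim hx0 by simp
      show ?case unfolding IA_def num[OF elim[THEN conjunct2, THEN conjunct2, THEN conjunct1]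
          elim[THEN conjunct2, THEN conjunct2, THEN conjunct2, THEN conjunct1]
          elim[THEN conjunct2, THEN conjunct2, THEN conjunct2, THEN conjunct2]]
        using elim eX mm by simp
    qed
    then show ?thesis using lim unfolding val target by (simp add: tendsto_cong)
  qed
qed

lemma gen_lim:
  assumes nn: "\<forall>y<n. \<forall>x<n. B y x \<ge> 0" and nz: "\<exists>y<n. \<exists>x<n. B y x \<noteq> 0"
  shows "((\<lambda>e. HX n (zero_freed B e)) \<longlongrightarrow> HX_plus n B) (at_right 0)"
    "((\<lambda>e. HY n (zero_freed B e)) \<longlongrightarrow> HY_plus n B) (at_right 0)"
    "((\<lambda>e. HXY n (zero_freed B e)) \<longlongrightarrow> HXY_plus n B) (at_right 0)"
proof -
  define aX where "aX = (\<Sum>x\<in>{x\<in>{..<n}. cX n B x = 0}. dX n B x)"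
  define aY where "aY = (\<Sum>y\<in>{y\<in>{..<n}. cY n B y = 0}. dY n B y)"
  define aXY where "aXY = (\<Sum>p\<in>{p\<in>{..<n}\<times>{..<n}. cXY B p = 0}. dXY B p)"
  obtain FX FY FXY where F:
    "\<forall>e>0. HX n (zero_freed B e) = FX e - aX * (e * log 2 e) / msum n (zero_freed B e) \<and>
      HY n (zero_freed B e) = FY e - aY * (e * log 2 e) / msum n (zero_freed B e) \<and>
      HXY n (zero_freed B e) = FXY e - aXY * (e * log 2 e) / msum n (zero_freed B e)"
    "(FX \<longlongrightarrow> HX_plus n B) (at_right 0)"
    "(FY \<longlongrightarrow> HY_plus n B) (at_right 0)"
    "(FXY \<longlongrightarrow> HXY_plus n B) (at_right 0)"
    using decomp[OF nn nz] unfolding aX_def aY_def aXY_def by blast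
  define S where "S = msum n B"
  have S: "S > 0" using msum_pos[OF nn nz] S_def by simp
  have Wlim: "((\<lambda>e. msum n (zero_freed B e)) \<longlongrightarrow> S) (at_right 0)"
    unfolding msum_zf_lin S_def by (auto intro!: tendsto_eq_intros)
  have ev: "\<forall>\<^sub>F e in at_right 0. HX n (zero_freed B e) = FX e - aX * (e * log 2 e) / msum n (zero_freed B e) \<and>
      HY n (zero_freed B e) = FY e - aY * (e * log 2 e) / msum n (zero_freed B e) \<and>
      HXY n (zero_freed B e) = FXY e - aXY * (e * log 2 e) / msum n (zero_freed B e)"
    using ev_small by eventually_elim (use F(1) in auto)
  have e1: "\<forall>\<^sub>F e in at_right 0. FX e - aX * (e * log 2 e) / msum n (zero_freed B e) = HX n (zero_freed B e)"
    using ev by (rule eventually_mono) simp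
  have e2: "\<forall>\<^sub>F e in at_right 0. FY e - aY * (e * log 2 e) / msum n (zero_freed B e) = HY n (zero_freed B e)"
    using ev by (rule eventually_mono) simp
  have e3: "\<forall>\<^sub>F e in at_right 0. FXY e - aXY * (e * log 2 e) / msum n (zero_freed B e) = HXY n (zero_freed B e)"
    using ev by (rule eventually_mono) simp
  have "((\<lambda>e. FX e - aX * (e * log 2 e) / msum n (zero_freed B e)) \<longlongrightarrow> HX_plus n B - aX * 0 / S) (at_right 0)"
    using F(2) Wlim phi_lim S by (intro tendsto_intros) auto
  then have "((\<lambda>e. FX e - aX * (e * log 2 e) / msum n (zero_freed B e)) \<longlongrightarrow> HX_plus n B) (at_right 0)" by simp
  then show "((\<lambda>e. HX n (zero_freed B e)) \<longlongrightarrow> HX_plus n B) (at_right 0)"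
    using Lim_transform_eventually[OF _ e1] by blast
  have "((\<lambda>e. FY e - aY * (e * log 2 e) / msum n (zero_freed B e)) \<longlongrightarrow> HY_plus n B - aY * 0 / S) (at_right 0)"
    using F(3) Wlim phi_lim S by (intro tendsto_intros) auto
  then have "((\<lambda>e. FY e - aY * (e * log 2 e) / msum n (zero_freed B e)) \<longlongrightarrow> HY_plus n B) (at_right 0)" by simp
  then show "((\<lambda>e. HY n (zero_freed B e)) \<longlongrightarrow> HY_plus n B) (at_right 0)"
    using Lim_transform_eventually[OF _ e2] by blast
  have "((\<lambda>e. FXY e - aXY * (e * log 2 e) / msum n (zero_freed B e)) \<longlongrightarrow> HXY_plus n B - aXY * 0 / S) (at_right 0)"
    using F(4) Wlim phi_lim S by (intro tendsto_intros) auto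
  then have "((\<lambda>e. FXY e - aXY * (e * log 2 e) / msum n (zero_freed B e)) \<longlongrightarrow> HXY_plus n B) (at_right 0)" by simp
  then show "((\<lambda>e. HXY n (zero_freed B e)) \<longlongrightarrow> HXY_plus n B) (at_right 0)"
    using Lim_transform_eventually[OF _ e3] by blast
qed

lemma aux1: "a > 0 \<Longrightarrow> (a + b - c) / a = 1 + (b - c) / (a::real)"
  by (simp add: field_simps)
lemma aux2: "b > 0 \<Longrightarrow> (a + b - c) / b = 1 + (a - c) / (b::real)"
  by (simp add: field_simps)

theorem corollary1:
  fixes n :: nat and B :: "nat \<Rightarrow> nat \<Rightarrow> real"
  assumes "n \<ge> 2"
    and "\<forall>y<n. \<forall>x<n. B y x \<ge> 0"
    and "\<exists>y<n. \<exists>x<n. B y x \<noteq> 0"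
  shows "\<exists>L. ((\<lambda>e. IA n (zero_freed B e)) \<longlongrightarrow> L) (at_right 0) \<and>
    (HY_plus n B = 0 \<longrightarrow> L = (real n - real (nonnull_cols n B)) / real n) \<and>
    (HX_plus n B = 0 \<longrightarrow> L = (real n - real (nonnull_rows n B)) / real n) \<and>
    (0 < HX_plus n B \<and> HX_plus n B \<le> HY_plus n B \<longrightarrow>
       L = 1 + (HY_plus n B - HXY_plus n B) / HX_plus n B) \<and>
    (0 < HY_plus n B \<and> HY_plus n B \<le> HX_plus n B \<longrightarrow>
       L = 1 + (HX_plus n B - HXY_plus n B) / HY_plus n B)"
proof -
  note n2 = assms(1) and nn = assms(2) and nz = assms(3)
  have degY: "((\<lambda>e. IA n (zero_freed B e)) \<longlongrightarrow> (real n - real (nonnull_cols n B)) / real n) (at_right 0)"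
    if "HY_plus n B = 0" using degen[OF n2 nn nz that] .
  have degX: "((\<lambda>e. IA n (zero_freed B e)) \<longlongrightarrow> (real n - real (nonnull_rows n B)) / real n) (at_right 0)"
    if h: "HX_plus n B = 0"
    using degen[OF n2 tr_nn[OF nn] tr_nz[OF nz]] h unfolding HYp_tr cols_tr zf_tr IA_tr by simp
  have hx0: "HX_plus n B \<ge> 0" using HXp_nonneg[OF nn nz] .
  have hy0: "HY_plus n B \<ge> 0" using HYp_nonneg[OF nn nz] .
  have nb: "at_right (0::real) \<noteq> bot" by simp
  show ?thesis
  proof (cases "HY_plus n B = 0")
    case True
    have c2: "HX_plus n B = 0 \<longrightarrow> (real n - real (nonnull_cols n B)) / real n = (real n - real (nonnull_rows n B)) / real n"
    proof
      assume "HX_plus n B = 0"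
      then show "(real n - real (nonnull_cols n B)) / real n = (real n - real (nonnull_rows n B)) / real n"
        using tendsto_unique[OF nb degY[OF True] degX] by blast
    qed
    have c3: "\<not> (0 < HX_plus n B \<and> HX_plus n B \<le> HY_plus n B)" using True by linarith
    have c4: "\<not> (0 < HY_plus n B \<and> HY_plus n B \<le> HX_plus n B)" using True by linarith
    show ?thesis
      apply (rule exI[of _ "(real n - real (nonnull_cols n B)) / real n"])
      using degY[OF True] c2 c3 c4 by blast
  next
    case hyn: False
    show ?thesis
    proof (cases "HX_plus n B = 0")
      case True
      have c3: "\<not> (0 < HX_plus n B \<and> HX_plus n B \<le> HY_plus n B)" using True by linarith
      have c4: "\<not> (0 < HY_plus n B \<and> HY_plus n B \<le> HX_plus n B)" using True hyn hy0 by linarith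
      show ?thesis
        apply (rule exI[of _ "(real n - real (nonnull_rows n B)) / real n"])
        using degX[OF True] hyn c3 c4 by blast
    next
      case hxn: False
      have px: "HX_plus n B > 0" and py: "HY_plus n B > 0" using hxn hyn hx0 hy0 by auto
      have lim: "((\<lambda>e. IA n (zero_freed B e)) \<longlongrightarrow>
          (HX_plus n B + HY_plus n B - HXY_plus n B) / min (HX_plus n B) (HY_plus n B)) (at_right 0)"
        unfolding IA_def using gen_lim[OF nn nz] px py by (intro tendsto_intros) auto
      have c3: "HX_plus n B \<le> HY_plus n B \<longrightarrow> (HX_plus n B + HY_plus n B - HXY_plus n B) / min (HX_plus n B) (HY_plus n B)
          = 1 + (HY_plus n B - HXY_plus n B) / HX_plus n B"
        using px by (simp add: min_absorb1 aux1)
      have c4: "HY_plus n B \<le> HX_plus n B \<longrightarrow> (HX_plus n B + HY_plus n B - HXY_plus n B) / min (HX_plus n B) (HY_plus n B)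
          = 1 + (HX_plus n B - HXY_plus n B) / HY_plus n B"
        using py by (simp add: min_absorb2 aux2)
      show ?thesis
        apply (rule exI[of _ "(HX_plus n B + HY_plus n B - HXY_plus n B) / min (HX_plus n B) (HY_plus n B)"])
        using lim c3 c4 hxn hyn by blast
    qed
  qed
qed

end
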